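(* Let $\mathcal{T},\mathcal{U},\mathcal{B}$ be tile sets with mutually consistent frequencies such that $\mathcal{B}$ consists only of exact tiles and $\mathrm{area}(\mathcal{T})\cap\mathrm{area}(\mathcal{U})\subseteq\mathrm{area}(\mathcal{B})$. Then $d(\mathcal{T},\mathcal{U};\mathcal{B})=1$.
   Context: Fix $n,m\ge1$; $\mathcal{D}$ is the set of $n\times m$ binary matrices. A tile is $T=(t(T),a(T))$ with nonempty $t(T)\subseteq\{1..n\}$, $a(T)\subseteq\{1..m\}$, $\mathrm{area}(T)=t(T)\times a(T)$, $\mathrm{area}(\mathcal{T})=\bigcup_{T\in\mathcal{T}}\mathrm{area}(T)$. $\mathrm{fr}(T;D)=\frac1{|\mathrm{area}(T)|}\sum_{(i,j)\in\mathrm{area}(T)}D(i,j)$, $\mathrm{fr}(T;p)=\sum_Dp(D)\mathrm{fr}(T;D)$. Each tile carries a target frequency $\alpha_T$; tile sets are consistent if some distribution on $\mathcal{D}$ attains all target frequencies simultaneously. For a tile set $\mathcal{T}$, $p^*_{\mathcal{T}}$ is the entropy-maximising distribution among those with $\mathrm{fr}(T;p)=\alpha_T$ for all $T\in\mathcal{T}$. $\mathrm{KL}(\mathcal{T}\|\mathcal{U})=\mathrm{KL}(p^*_{\mathcal{T}}\|p^*_{\mathcal{U}})$. A tile is exact if its frequency is $0$ or $1$. With $\mathcal{M}=\mathcal{T}\cup\mathcal{U}\cup\mathcal{B}$, $d(\mathcal{T},\mathcal{U};\mathcal{B})=\frac{\mathrm{KL}(\mathcal{M}\|\mathcal{U}\cup\mathcal{B})+\mathrm{KL}(\mathcal{M}\|\mathcal{T}\cup\mathcal{B})}{\mathrm{KL}(\mathcal{M}\|\mathcal{B})}$,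 defined as $1$ if $\mathrm{KL}(\mathcal{M}\|\mathcal{B})=0$. *)

theory Defs
  imports Complex_Main
begin

text \<open>Binary n x m matrices are represented by the set of cells (i,j) carrying a 1,
  with 1 \<le> i \<le> n and 1 \<le> j \<le> m.\<close>

definition cells :: "nat \<Rightarrow> nat \<Rightarrow> (nat \<times> nat) set" where
  "cells n m = {1..n} \<times> {1..m}"

definition matrices :: "nat \<Rightarrow> nat \<Rightarrow> (nat \<times> nat) set set" where
  "matrices n m = Pow (cells n m)"

text \<open>A tile is a pair (t(T), a(T)) of row and column sets.\<close>
type_synonym tile = "nat set \<times> nat set"

definition is_tile :: "nat \<Rightarrow> nat \<Rightarrow> tile \<Rightarrow> bool" where
  "is_tile n m T \<longleftrightarrow> fst T \<noteq> {} \<and> fst T \<subseteq> {1..n} \<and> snd T \<noteq> {} \<and> snd T \<subseteq> {1..m}"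

definition area :: "tile \<Rightarrow> (nat \<times> nat) set" where
  "area T = fst T \<times> snd T"

definition area_set :: "tile set \<Rightarrow> (nat \<times> nat) set" where
  "area_set TS = (\<Union>T\<in>TS. area T)"

definition fr_mat :: "tile \<Rightarrow> (nat \<times> nat) set \<Rightarrow> real" where
  "fr_mat T D = (1 / real (card (area T))) * (\<Sum>c\<in>area T. if c \<in> D then 1 else 0)"

text \<open>Distributions on the matrices (values outside the matrix set are irrelevant).\<close>
definition is_distr :: "nat \<Rightarrow> nat \<Rightarrow> ((nat \<times> nat) set \<Rightarrow> real) \<Rightarrow> bool" where
  "is_distr n m p \<longleftrightarrow> (\<forall>D\<in>matrices n m. p D \<ge> 0) \<and> (\<Sum>D\<in>matrices n m. p D) = 1"

definition fr_distr :: "nat \<Rightarrow> nat \<Rightarrow> tile \<Rightarrow> ((nat \<times> nat) set \<Rightarrow> real) \<Rightarrow> real" where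
  "fr_distr n m T p = (\<Sum>D\<in>matrices n m. p D * fr_mat T D)"

text \<open>Target frequencies are given by a global function alpha on tiles.\<close>
definition satisfies :: "nat \<Rightarrow> nat \<Rightarrow> (tile \<Rightarrow> real) \<Rightarrow> tile set \<Rightarrow> ((nat \<times> nat) set \<Rightarrow> real) \<Rightarrow> bool" where
  "satisfies n m \<alpha> TS p \<longleftrightarrow> is_distr n m p \<and> (\<forall>T\<in>TS. fr_distr n m T p = \<alpha> T)"

definition consistent :: "nat \<Rightarrow> nat \<Rightarrow> (tile \<Rightarrow> real) \<Rightarrow> tile set \<Rightarrow> bool" where
  "consistent n m \<alpha> TS \<longleftrightarrow> (\<exists>p. satisfies n m \<alpha> TS p)"

text \<open>Shannon entropy (natural log; note ln 0 = 0 so 0 ln 0 = 0).\<close>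
definition entropy :: "nat \<Rightarrow> nat \<Rightarrow> ((nat \<times> nat) set \<Rightarrow> real) \<Rightarrow> real" where
  "entropy n m p = - (\<Sum>D\<in>matrices n m. p D * ln (p D))"

definition maxent :: "nat \<Rightarrow> nat \<Rightarrow> (tile \<Rightarrow> real) \<Rightarrow> tile set \<Rightarrow> ((nat \<times> nat) set \<Rightarrow> real)" where
  "maxent n m \<alpha> TS = (SOME p. satisfies n m \<alpha> TS p \<and>
      (\<forall>q. satisfies n m \<alpha> TS q \<longrightarrow> entropy n m q \<le> entropy n m p))"

definition KL :: "nat \<Rightarrow> nat \<Rightarrow> ((nat \<times> nat) set \<Rightarrow> real) \<Rightarrow> ((nat \<times> nat) set \<Rightarrow> real) \<Rightarrow> real" where
  "KL n m p q = (\<Sum>D\<in>{D\<in>matrices n m. p D > 0}. p D * ln (p D / q D))"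

definition KL_tiles :: "nat \<Rightarrow> nat \<Rightarrow> (tile \<Rightarrow> real) \<Rightarrow> tile set \<Rightarrow> tile set \<Rightarrow> real" where
  "KL_tiles n m \<alpha> TS US = KL n m (maxent n m \<alpha> TS) (maxent n m \<alpha> US)"

definition exact :: "(tile \<Rightarrow> real) \<Rightarrow> tile \<Rightarrow> bool" where
  "exact \<alpha> T \<longleftrightarrow> \<alpha> T = 0 \<or> \<alpha> T = 1"

definition dtiles :: "nat \<Rightarrow> nat \<Rightarrow> (tile \<Rightarrow> real) \<Rightarrow> tile set \<Rightarrow> tile set \<Rightarrow> tile set \<Rightarrow> real" where
  "dtiles n m \<alpha> TS US BS =
     (let M = TS \<union> US \<union> BS in
      if KL_tiles n m \<alpha> M BS = 0 then 1
      else (KL_tiles n m \<alpha> M (US \<union> BS) + KL_tiles n m \<alpha> M (TS \<union> BS)) / KL_tiles n m \<alpha> M BS)"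

end

theory Submission imports Defs "HOL-Analysis.Analysis" "HOL-Real_Asymp.Real_Asymp" begin


lemma gibbs_pt:
  fixes a y :: real assumes "a \<ge> 0" "y > 0"
  shows "a * ln a - a * ln y \<ge> a - y"
proof (cases "a = 0")
  case True then show ?thesis using assms by simp
next
  case False
  then have a: "a > 0" using assms by simp
  have "ln (y/a) \<le> y/a - 1" using ln_le_minus_one[of "y/a"] a assms by simp
  then have "a * ln (y/a) \<le> a * (y/a - 1)" using a by (simp add: mult_left_mono)
  then show ?thesis using a assms by (simp add: ln_div algebra_simps)
qed

lemma gibbs_pt_eq:
  fixes a y :: real assumes "a \<ge> 0" "y > 0" "a * ln a - a * ln y = a - y"
  shows "a = y"
proof (cases "a = 0")
  case True then show ?thesis using assms by simp
next
  case False
  then have a: "a > 0" using assms by simp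
  have "a * ln (y/a) = a * (y/a - 1)" using assms a by (simp add: ln_div algebra_simps)
  then have "ln (y/a) = y/a - 1" using a by simp
  then have "y/a = 1" using ln_eq_minus_one[of "y/a"] a assms by simp
  then show ?thesis using a by simp
qed

lemma concave_xlnx:
  fixes a b t :: real assumes "a \<ge> 0" "b \<ge> 0" "0 \<le> t" "t \<le> 1"
  shows "((1-t)*a + t*b) * ln ((1-t)*a + t*b) \<le> (1-t) * (a * ln a) + t * (b * ln b)"
proof -
  define y where "y = (1-t)*a + t*b"
  have y0: "y \<ge> 0" using assms unfolding y_def by simp
  show ?thesis
  proof (cases "y = 0")
    case True
    then have "(1-t)*a = 0 \<and> t*b = 0" using assms unfolding y_def
      by (smt (verit) mult_nonneg_nonneg)
    then show ?thesis using True by (auto simp: y_def)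
  next
    case False
    then have yp: "y > 0" using y0 by simp
    have 1: "(1-t) * (a * ln a - a * ln y) \<ge> (1-t) * (a - y)"
      using gibbs_pt[OF assms(1) yp] assms by (simp add: mult_left_mono)
    have 2: "t * (b * ln b - b * ln y) \<ge> t * (b - y)"
      using gibbs_pt[OF assms(2) yp] assms by (simp add: mult_left_mono)
    have "(1-t) * (a - y) + t * (b - y) = 0" unfolding y_def by (simp add: algebra_simps)
    then have "(1-t) * (a * ln a - a * ln y) + t * (b * ln b - b * ln y) \<ge> 0" using 1 2 by linarith
    then have "y * ln y \<le> (1-t) * (a * ln a) + t * (b * ln b)"
      unfolding y_def by (simp add: algebra_simps)
    then show ?thesis unfolding y_def .
  qed
qed



lemma xlnx_tendsto: "((\<lambda>x::real. x * ln x) \<longlongrightarrow> 0) (at_right 0)"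
  by real_asymp

lemma cont_xlnx: "continuous_on {0::real..} (\<lambda>x. x * ln x)"
  unfolding continuous_on_eq_continuous_within
proof
  fix x :: real assume "x \<in> {0..}"
  show "continuous (at x within {0..}) (\<lambda>x. x * ln x)"
  proof (cases "x = 0")
    case True
    then show ?thesis unfolding continuous_within using xlnx_tendsto
      by (simp add: at_within_Ici_at_right)
  next
    case False
    then have "x > 0" using \<open>x \<in> {0..}\<close> by simp
    then have "isCont (\<lambda>x. x * ln x) x" by (auto intro!: continuous_intros)
    then show ?thesis using continuous_at_imp_continuous_at_within by blast
  qed
qed



lemma finite_cells: "finite (cells n m)" by (simp add: cells_def)
lemma finite_matrices: "finite (matrices n m)" by (simp add: matrices_def finite_cells)

lemma satisfies_cong:
  assumes "\<And>D. D \<in> matrices n m \<Longrightarrow> p D = q D"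
  shows "satisfies n m \<alpha> S p = satisfies n m \<alpha> S q"
  using assms unfolding satisfies_def is_distr_def fr_distr_def
  by (simp cong: sum.cong)

lemma entropy_cong:
  assumes "\<And>D. D \<in> matrices n m \<Longrightarrow> p D = q D"
  shows "entropy n m p = entropy n m q"
  using assms unfolding entropy_def by (simp cong: sum.cong)

lemma maxent_exists:
  assumes "consistent n m \<alpha> S"
  shows "\<exists>p. satisfies n m \<alpha> S p \<and> (\<forall>q. satisfies n m \<alpha> S q \<longrightarrow> entropy n m q \<le> entropy n m p)"
proof -
  define \<Omega> where "\<Omega> = matrices n m"
  have fin: "finite \<Omega>" unfolding \<Omega>_def by (rule finite_matrices)
  define X where "X = product_topology (\<lambda>_. euclideanreal) \<Omega>"
  have top: "topspace X = extensional \<Omega>" unfolding X_def by (simp add: PiE_def)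
  define F where "F = {p \<in> topspace X. satisfies n m \<alpha> S p}"
  define K where "K = insert {p \<in> topspace X. sum p \<Omega> \<in> {1}}
      ((\<lambda>D. {p \<in> topspace X. p D \<in> {0..}}) ` \<Omega> \<union> (\<lambda>T. {p \<in> topspace X. fr_distr n m T p \<in> {\<alpha> T}}) ` S)"
  have FK: "F = \<Inter>K"
    unfolding F_def K_def satisfies_def is_distr_def \<Omega>_def by auto
  have proj: "continuous_map X euclideanreal (\<lambda>p. p D)" if "D \<in> \<Omega>" for D
    unfolding X_def using that by (auto intro!: continuous_intros)
  have "closedin X F"
    unfolding FK
  proof (rule closedin_Inter)
    show "K \<noteq> {}" unfolding K_def by simp
    fix A assume "A \<in> K"
    then show "closedin X A" unfolding K_def
    proof (elim insertE UnE imageE)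
      assume "A = {p \<in> topspace X. sum p \<Omega> \<in> {1}}"
      have "closedin X {p \<in> topspace X. (\<lambda>p. \<Sum>D\<in>\<Omega>. p D) p \<in> {1}}"
        by (rule closedin_continuous_map_preimage) (auto intro!: continuous_map_sum proj fin)
      then show ?thesis using \<open>A = _\<close> by simp
    next
      fix D assume "A = {p \<in> topspace X. p D \<in> {0..}}" "D \<in> \<Omega>"
      have "closedin X {p \<in> topspace X. (\<lambda>p. p D) p \<in> {0..}}"
        by (rule closedin_continuous_map_preimage) (auto intro!: proj \<open>D \<in> \<Omega>\<close>)
      then show ?thesis using \<open>A = _\<close> by simp
    next
      fix T assume "A = {p \<in> topspace X. fr_distr n m T p \<in> {\<alpha> T}}" "T \<in> S"
      have "closedin X {p \<in> topspace X. (\<lambda>p. \<Sum>D\<in>\<Omega>. p D * fr_mat T D) p \<in> {\<alpha> T}}"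
        by (rule closedin_continuous_map_preimage) (auto intro!: continuous_map_sum
             continuous_map_real_mult proj fin)
      then show ?thesis using \<open>A = _\<close> unfolding fr_distr_def \<Omega>_def by simp
    qed
  qed
  moreover have "compactin X (PiE \<Omega> (\<lambda>_. {0..1}))"
    unfolding X_def by (simp add: compactin_PiE)
  moreover have "F \<subseteq> PiE \<Omega> (\<lambda>_. {0..1})"
  proof
    fix p assume "p \<in> F"
    then have p: "p \<in> extensional \<Omega>" "\<forall>D\<in>\<Omega>. p D \<ge> 0" "sum p \<Omega> = 1"
      unfolding F_def top satisfies_def is_distr_def \<Omega>_def by auto
    have "p D \<le> 1" if "D \<in> \<Omega>" for D
      using member_le_sum[of D \<Omega> p] p that fin by auto
    then show "p \<in> PiE \<Omega> (\<lambda>_. {0..1})" using p by (auto simp: PiE_def)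
  qed
  ultimately have cF: "compactin X F" using closed_compactin by blast
  obtain p0 where p0: "satisfies n m \<alpha> S p0" using assms unfolding consistent_def by blast
  define p1 where "p1 = restrict p0 \<Omega>"
  have p1F: "p1 \<in> F" unfolding F_def top p1_def
    using p0 satisfies_cong[of n m "restrict p0 \<Omega>" p0] by (simp add: \<Omega>_def)
  have cont: "continuous_map (subtopology X F) euclideanreal (entropy n m)"
  proof -
    have "continuous_map (subtopology X F) euclideanreal (\<lambda>p. p D * ln (p D))" if D: "D \<in> \<Omega>" for D
    proof -
      have "continuous_map (subtopology X F) (top_of_set {0..}) (\<lambda>p. p D)"
        unfolding continuous_map_in_subtopology
        using continuous_map_from_subtopology[OF proj[OF D], of F] D
        unfolding F_def satisfies_def is_distr_def \<Omega>_def by auto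
      moreover have "continuous_map (top_of_set {0..}) euclideanreal (\<lambda>x::real. x * ln x)"
        using cont_xlnx by simp
      ultimately show ?thesis using continuous_map_compose[of _ _ _ _ "\<lambda>x::real. x * ln x"]
        unfolding o_def by blast
    qed
    then have "continuous_map (subtopology X F) euclideanreal (\<lambda>p. - (\<Sum>D\<in>\<Omega>. p D * ln (p D)))"
      by (intro continuous_map_minus continuous_map_sum fin) auto
    then show ?thesis unfolding entropy_def \<Omega>_def by (simp add: fun_eq_iff)
  qed
  have "compactin euclideanreal (entropy n m ` F)"
    using image_compactin[OF _ cont] cF by (simp add: compactin_subtopology)
  then have "compact (entropy n m ` F)" by simp
  moreover have "entropy n m ` F \<noteq> {}" using p1F by auto
  ultimately obtain s where "s \<in> entropy n m ` F" "\<forall>t\<in>entropy n m ` F. t \<le> s"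
    using compact_attains_sup by blast
  then obtain p where pF: "p \<in> F" and pmax: "\<And>q. q \<in> F \<Longrightarrow> entropy n m q \<le> entropy n m p"
    by blast
  show ?thesis
  proof (intro exI conjI allI impI)
    show "satisfies n m \<alpha> S p" using pF unfolding F_def by simp
    fix q assume q: "satisfies n m \<alpha> S q"
    have "restrict q \<Omega> \<in> F" unfolding F_def top
      using q satisfies_cong[of n m "restrict q \<Omega>" q] by (simp add: \<Omega>_def)
    then have "entropy n m (restrict q \<Omega>) \<le> entropy n m p" by (rule pmax)
    moreover have "entropy n m (restrict q \<Omega>) = entropy n m q"
      by (rule entropy_cong) (simp add: \<Omega>_def)
    ultimately show "entropy n m q \<le> entropy n m p" by simp
  qed
qed



lemma maxent_spec:
  assumes "consistent n m \<alpha> S"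
  shows "satisfies n m \<alpha> S (maxent n m \<alpha> S)"
    "\<And>q. satisfies n m \<alpha> S q \<Longrightarrow> entropy n m q \<le> entropy n m (maxent n m \<alpha> S)"
  using someI_ex[OF maxent_exists[OF assms]] unfolding maxent_def by blast+

lemma sat_affine:
  assumes "satisfies n m \<alpha> S q" "satisfies n m \<alpha> S x"
    "\<forall>D\<in>matrices n m. 0 \<le> q D + t * (x D - q D)"
  shows "satisfies n m \<alpha> S (\<lambda>D. q D + t * (x D - q D))"
proof -
  have "(\<Sum>D\<in>matrices n m. q D + t * (x D - q D)) =
        (\<Sum>D\<in>matrices n m. q D) + t * ((\<Sum>D\<in>matrices n m. x D) - (\<Sum>D\<in>matrices n m. q D))"
  proof -
    have "(\<Sum>D\<in>matrices n m. t * (x D - q D)) = t * (\<Sum>D\<in>matrices n m. (x D - q D))"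
      by (simp add: sum_distrib_left)
    then show ?thesis by (simp add: sum.distrib sum_subtractf)
  qed
  moreover have "fr_distr n m T (\<lambda>D. q D + t * (x D - q D)) =
     fr_distr n m T q + t * (fr_distr n m T x - fr_distr n m T q)" for T
    unfolding fr_distr_def
    by (simp add: sum.distrib sum_distrib_left sum_subtractf algebra_simps)
  ultimately show ?thesis using assms unfolding satisfies_def is_distr_def by auto
qed

lemma gibbs:
  fixes p q :: "'a \<Rightarrow> real"
  assumes fin: "finite A" and p0: "\<forall>D\<in>A. p D \<ge> 0" and q0: "\<forall>D\<in>A. q D \<ge> 0"
    and ps: "sum p A = 1" and qs: "sum q A = 1" and sup: "\<forall>D\<in>A. p D > 0 \<longrightarrow> q D > 0"
  shows "(\<Sum>D\<in>A. p D * ln (p D) - p D * ln (q D)) \<ge> 0"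
    and "(\<Sum>D\<in>A. p D * ln (p D) - p D * ln (q D)) = 0 \<Longrightarrow> \<forall>D\<in>A. p D = q D"
proof -
  define g where "g D = p D * ln (p D) - p D * ln (q D) - (p D - q D)" for D
  have g0: "g D \<ge> 0" if "D \<in> A" for D
  proof (cases "p D > 0")
    case True
    then show ?thesis using gibbs_pt[of "p D" "q D"] sup that unfolding g_def by auto
  next
    case False
    then have "p D = 0" using p0 that by force
    then show ?thesis using q0 that unfolding g_def by simp
  qed
  have gs: "sum g A = (\<Sum>D\<in>A. p D * ln (p D) - p D * ln (q D))"
    unfolding g_def using ps qs by (simp add: sum_subtractf)
  show "(\<Sum>D\<in>A. p D * ln (p D) - p D * ln (q D)) \<ge> 0"
    using sum_nonneg[of A g] g0 gs by auto
  assume "(\<Sum>D\<in>A. p D * ln (p D) - p D * ln (q D)) = 0"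
  then have "sum g A = 0" using gs by simp
  then have gz: "\<forall>D\<in>A. g D = 0" using sum_nonneg_eq_0_iff[OF fin] g0 by blast
  show "\<forall>D\<in>A. p D = q D"
  proof
    fix D assume D: "D \<in> A"
    show "p D = q D"
    proof (cases "p D > 0")
      case True
      then show ?thesis using gibbs_pt_eq[of "p D" "q D"] sup gz D unfolding g_def by auto
    next
      case False
      then have "p D = 0" using p0 D by force
      then show ?thesis using bspec[OF gz D] unfolding g_def by simp
    qed
  qed
qed

lemma pyth_supp:
  assumes sq: "satisfies n m \<alpha> S q"
    and qmax: "\<And>y. satisfies n m \<alpha> S y \<Longrightarrow> entropy n m y \<le> entropy n m q"
    and sx: "satisfies n m \<alpha> S x" and D0: "D0 \<in> matrices n m" and x0: "x D0 > 0"
  shows "q D0 > 0"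
proof (rule ccontr)
  define \<Omega> where "\<Omega> = matrices n m"
  have fin: "finite \<Omega>" unfolding \<Omega>_def by (rule finite_matrices)
  have q0: "\<forall>D\<in>\<Omega>. q D \<ge> 0" and xn: "\<forall>D\<in>\<Omega>. x D \<ge> 0"
    using sq sx unfolding satisfies_def is_distr_def \<Omega>_def by auto
  assume "\<not> q D0 > 0"
  then have qD0: "q D0 = 0" using q0 D0 unfolding \<Omega>_def by force
  define g where "g y = y * ln y" for y :: real
  define K where "K = (\<Sum>D\<in>\<Omega>. g (q D) - g (x D))"
  define t where "t = exp (- (\<bar>K\<bar> + 1) / x D0)"
  have t0: "t > 0" unfolding t_def by simp
  have "(- (\<bar>K\<bar> + 1)) / x D0 < 0" using x0 by (intro divide_neg_pos) auto
  then have t1: "t < 1" unfolding t_def by simp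
  have lnt: "x D0 * ln t = - (\<bar>K\<bar> + 1)" unfolding t_def using x0 by simp
  define p where "p D = q D + t * (x D - q D)" for D
  have pnn: "\<forall>D\<in>\<Omega>. 0 \<le> p D"
  proof
    fix D assume "D \<in> \<Omega>"
    then have "0 \<le> (1-t) * q D + t * x D" using q0 xn t0 t1 by simp
    then show "0 \<le> p D" unfolding p_def by (simp add: algebra_simps)
  qed
  have sp: "satisfies n m \<alpha> S p" unfolding p_def
    using sat_affine[OF sq sx] pnn unfolding \<Omega>_def p_def by blast
  have ent: "entropy n m q - entropy n m p = (\<Sum>D\<in>\<Omega>. g (p D) - g (q D))"
    unfolding entropy_def g_def \<Omega>_def by (simp add: sum_subtractf)
  have conc: "g (p D) - g (q D) \<le> t * (g (x D) - g (q D))" if "D \<in> \<Omega>" for D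
  proof -
    have "g ((1-t) * q D + t * x D) \<le> (1-t) * g (q D) + t * g (x D)"
      unfolding g_def using concave_xlnx[of "q D" "x D" t] q0 xn that t0 t1 by simp
    moreover have "(1-t) * q D + t * x D = p D" unfolding p_def by (simp add: algebra_simps)
    ultimately show ?thesis by (simp add: algebra_simps)
  qed
  have atD0: "g (p D0) - g (q D0) = t * (g (x D0) - g (q D0)) + t * (x D0 * ln t)"
    unfolding g_def p_def qD0 using t0 x0 by (simp add: ln_mult algebra_simps)
  have "(\<Sum>D\<in>\<Omega>. g (p D) - g (q D)) = (g (p D0) - g (q D0)) + (\<Sum>D\<in>\<Omega>-{D0}. g (p D) - g (q D))"
    using sum.remove[OF fin, of D0] D0 unfolding \<Omega>_def by simp
  also have "\<dots> \<le> t * (g (x D0) - g (q D0)) + t * (x D0 * ln t) + (\<Sum>D\<in>\<Omega>-{D0}. t * (g (x D) - g (q D)))"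
    using atD0 sum_mono[of "\<Omega>-{D0}" "\<lambda>D. g (p D) - g (q D)" "\<lambda>D. t * (g (x D) - g (q D))"] conc
    by force
  also have "\<dots> = t * (x D0 * ln t) + (\<Sum>D\<in>\<Omega>. t * (g (x D) - g (q D)))"
    using sum.remove[OF fin, of D0 "\<lambda>D. t * (g (x D) - g (q D))"] D0 unfolding \<Omega>_def by simp
  also have "\<dots> = t * (- (\<bar>K\<bar> + 1) - K)"
    unfolding lnt K_def by (simp add: sum_distrib_left[symmetric] sum_subtractf algebra_simps)
  also have "\<dots> < 0" using t0 by (simp add: mult_pos_neg)
  finally have "entropy n m q < entropy n m p" using ent by simp
  with qmax[OF sp] show False by simp
qed

lemma deriv_term:
  fixes c e :: real assumes "c > 0"
  shows "((\<lambda>t. (c + t * e) * ln (c + t * e)) has_field_derivative (e * ln c + e)) (at 0)"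
proof -
  have "((\<lambda>t. (c + t * e) * ln (c + t * e)) has_field_derivative
        ((0 + (1 * e)) * ln (c + 0 * e) + (c + 0 * e) * ((0 + 1 * e) / (c + 0 * e)))) (at 0)"
    using assms by (auto intro!: derivative_eq_intros)
  then show ?thesis using assms by simp
qed

lemma pyth_eq:
  assumes sq: "satisfies n m \<alpha> S q"
    and qmax: "\<And>y. satisfies n m \<alpha> S y \<Longrightarrow> entropy n m y \<le> entropy n m q"
    and sx: "satisfies n m \<alpha> S x"
  shows "(\<Sum>D\<in>matrices n m. x D * ln (q D)) = (\<Sum>D\<in>matrices n m. q D * ln (q D))"
proof -
  define \<Omega> where "\<Omega> = matrices n m"
  have fin: "finite \<Omega>" unfolding \<Omega>_def by (rule finite_matrices)
  have q0: "\<forall>D\<in>\<Omega>. q D \<ge> 0" and xn: "\<forall>D\<in>\<Omega>. x D \<ge> 0"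
    and qs: "sum q \<Omega> = 1" and xs: "sum x \<Omega> = 1"
    using sq sx unfolding satisfies_def is_distr_def \<Omega>_def by auto
  define Q where "Q = {D\<in>\<Omega>. q D > 0}"
  have QO: "Q \<subseteq> \<Omega>" unfolding Q_def by auto
  have finQ: "finite Q" using fin QO finite_subset by blast
  have off: "q D = 0 \<and> x D = 0" if "D \<in> \<Omega> - Q" for D
  proof
    show "q D = 0" using that q0 unfolding Q_def by force
    show "x D = 0"
    proof (rule ccontr)
      assume "x D \<noteq> 0"
      then have "x D > 0" using xn that by force
      then have "q D > 0" using pyth_supp[OF sq qmax sx] that unfolding \<Omega>_def by blast
      then show False using that unfolding Q_def by auto
    qed
  qed
  have Qne: "Q \<noteq> {}"
  proof
    assume "Q = {}"
    then have "sum q \<Omega> = 0" using off by (intro sum.neutral) auto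
    then show False using qs by simp
  qed
  define \<delta> where "\<delta> D = x D - q D" for D
  define d where "d = Min ((\<lambda>D. q D / (\<bar>\<delta> D\<bar> + 1)) ` Q)"
  have d0: "d > 0" unfolding d_def using finQ Qne by (auto simp: Q_def)
  have pos: "q D + t * \<delta> D > 0" if "\<bar>t\<bar> < d" "D \<in> Q" for t D
  proof -
    have "d \<le> q D / (\<bar>\<delta> D\<bar> + 1)" unfolding d_def using finQ that(2) by simp
    then have "\<bar>t\<bar> * (\<bar>\<delta> D\<bar> + 1) < q D"
      using that(1) by (simp add: pos_le_divide_eq) (smt (verit) mult_strict_right_mono abs_ge_zero)
    moreover have "\<bar>t * \<delta> D\<bar> \<le> \<bar>t\<bar> * (\<bar>\<delta> D\<bar> + 1)" by (simp add: abs_mult mult_left_mono)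
    ultimately show ?thesis by linarith
  qed
  define f where "f t = (\<Sum>D\<in>Q. (q D + t * \<delta> D) * ln (q D + t * \<delta> D))" for t
  have entf: "entropy n m (\<lambda>D. q D + t * (x D - q D)) = - f t" for t
  proof -
    have "(\<Sum>D\<in>\<Omega>. (q D + t * (x D - q D)) * ln (q D + t * (x D - q D))) =
          (\<Sum>D\<in>Q. (q D + t * (x D - q D)) * ln (q D + t * (x D - q D)))"
      using off by (intro sum.mono_neutral_right[OF fin QO]) auto
    then show ?thesis unfolding entropy_def f_def \<delta>_def \<Omega>_def by simp
  qed
  have f0: "f 0 = - entropy n m q"
    using entf[of 0] by simp
  have loc: "\<forall>y. \<bar>0 - y\<bar> < d \<longrightarrow> f 0 \<le> f y"
  proof (intro allI impI)
    fix y :: real assume "\<bar>0 - y\<bar> < d"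
    then have y: "\<bar>y\<bar> < d" by simp
    have "\<forall>D\<in>matrices n m. 0 \<le> q D + y * (x D - q D)"
    proof
      fix D assume D: "D \<in> matrices n m"
      show "0 \<le> q D + y * (x D - q D)"
      proof (cases "D \<in> Q")
        case True then show ?thesis using pos[OF y True] unfolding \<delta>_def by simp
      next
        case False then show ?thesis using off D unfolding \<Omega>_def by simp
      qed
    qed
    then have "satisfies n m \<alpha> S (\<lambda>D. q D + y * (x D - q D))" using sat_affine[OF sq sx] by blast
    from qmax[OF this] show "f 0 \<le> f y" using entf[of y] f0 by simp
  qed
  have der: "(f has_field_derivative (\<Sum>D\<in>Q. \<delta> D * ln (q D) + \<delta> D)) (at 0)"
    unfolding f_def by (rule DERIV_sum) (rule deriv_term, simp add: Q_def)
  have "(\<Sum>D\<in>Q. \<delta> D * ln (q D) + \<delta> D) = 0"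
    using DERIV_local_min[OF der d0 loc] .
  moreover have "(\<Sum>D\<in>Q. \<delta> D) = 0"
  proof -
    have "sum x Q = sum x \<Omega>" using off by (intro sum.mono_neutral_left[OF fin QO]) auto
    moreover have "sum q Q = sum q \<Omega>" using off by (intro sum.mono_neutral_left[OF fin QO]) auto
    ultimately show ?thesis unfolding \<delta>_def using xs qs by (simp add: sum_subtractf)
  qed
  ultimately have z: "(\<Sum>D\<in>Q. \<delta> D * ln (q D)) = 0" by (simp add: sum.distrib)
  have "(\<Sum>D\<in>\<Omega>. x D * ln (q D)) = (\<Sum>D\<in>Q. x D * ln (q D))"
    using off by (intro sum.mono_neutral_right[OF fin QO]) auto
  moreover have "(\<Sum>D\<in>\<Omega>. q D * ln (q D)) = (\<Sum>D\<in>Q. q D * ln (q D))"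
    using off by (intro sum.mono_neutral_right[OF fin QO]) auto
  ultimately show ?thesis using z unfolding \<delta>_def \<Omega>_def
    by (simp add: left_diff_distrib sum_subtractf)
qed



lemma KL_pyth:
  assumes sq: "satisfies n m \<alpha> S q"
    and qmax: "\<And>y. satisfies n m \<alpha> S y \<Longrightarrow> entropy n m y \<le> entropy n m q"
    and sx: "satisfies n m \<alpha> S x"
  shows "KL n m x q = entropy n m q - entropy n m x"
proof -
  define \<Omega> where "\<Omega> = matrices n m"
  have fin: "finite \<Omega>" unfolding \<Omega>_def by (rule finite_matrices)
  have xn: "\<forall>D\<in>\<Omega>. x D \<ge> 0" using sx unfolding satisfies_def is_distr_def \<Omega>_def by auto
  have "KL n m x q = (\<Sum>D\<in>\<Omega>. x D * ln (x D) - x D * ln (q D))"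
    unfolding KL_def \<Omega>_def[symmetric]
  proof (rule sum.mono_neutral_cong_left[OF fin])
    show "{D \<in> \<Omega>. 0 < x D} \<subseteq> \<Omega>" by auto
    show "\<forall>i\<in>\<Omega> - {D \<in> \<Omega>. 0 < x D}. x i * ln (x i) - x i * ln (q i) = 0"
      using xn by force
    fix D assume "D \<in> {D \<in> \<Omega>. 0 < x D}"
    then have "x D > 0" "q D > 0" using pyth_supp[OF sq qmax sx] unfolding \<Omega>_def by auto
    then show "x D * ln (x D / q D) = x D * ln (x D) - x D * ln (q D)"
      by (simp add: ln_div algebra_simps)
  qed
  also have "\<dots> = (\<Sum>D\<in>\<Omega>. x D * ln (x D)) - (\<Sum>D\<in>\<Omega>. q D * ln (q D))"
    using pyth_eq[OF sq qmax sx] unfolding \<Omega>_def by (simp add: sum_subtractf)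
  finally show ?thesis unfolding entropy_def \<Omega>_def by simp
qed

lemma maxent_unique:
  assumes s1: "satisfies n m \<alpha> S q1"
    and m1: "\<And>y. satisfies n m \<alpha> S y \<Longrightarrow> entropy n m y \<le> entropy n m q1"
    and s2: "satisfies n m \<alpha> S q2"
    and m2: "\<And>y. satisfies n m \<alpha> S y \<Longrightarrow> entropy n m y \<le> entropy n m q2"
    and D: "D \<in> matrices n m"
  shows "q1 D = q2 D"
proof -
  have "entropy n m q1 = entropy n m q2" using m1[OF s2] m2[OF s1] by simp
  then have "KL n m q1 q2 = 0" using KL_pyth[OF s2 m2 s1] by simp
  have e: "(\<Sum>D\<in>matrices n m. q1 D * ln (q1 D) - q1 D * ln (q2 D)) = 0"
    using pyth_eq[OF s2 m2 s1] \<open>entropy n m q1 = entropy n m q2\<close>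
    unfolding entropy_def by (simp add: sum_subtractf)
  have "\<forall>D\<in>matrices n m. q1 D = q2 D"
    apply (rule gibbs(2)[where p=q1 and q=q2, OF finite_matrices _ _ _ _ _ e])
    using s1 s2 pyth_supp[OF s2 m2 s1] unfolding satisfies_def is_distr_def by auto
  then show ?thesis using D by blast
qed

definition tog :: "(nat \<times> nat) set \<Rightarrow> (nat \<times> nat) set \<Rightarrow> (nat \<times> nat) set" where
  "tog E D = (D - E) \<union> (E - D)"

lemma tog_in: "E \<subseteq> cells n m \<Longrightarrow> D \<in> matrices n m \<Longrightarrow> tog E D \<in> matrices n m"
  unfolding tog_def matrices_def by auto

lemma tog_tog: "tog E (tog E D) = D"
  unfolding tog_def by auto

lemma sum_tog:
  assumes "E \<subseteq> cells n m"
  shows "(\<Sum>D\<in>matrices n m. f (tog E D)) = (\<Sum>D\<in>matrices n m. f D)"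
  by (rule sum.reindex_bij_witness[of _ "tog E" "tog E"]) (auto simp: tog_tog tog_in[OF assms])

lemma fr_mat_cong:
  assumes "area T \<inter> D = area T \<inter> D'" shows "fr_mat T D = fr_mat T D'"
proof -
  have "(\<Sum>c\<in>area T. if c \<in> D then 1 else 0) = (\<Sum>c\<in>area T. if c \<in> D' then (1::real) else 0)"
  proof (rule sum.cong[OF refl])
    fix x assume "x \<in> area T"
    then have "x \<in> D \<longleftrightarrow> x \<in> D'" using assms by blast
    then show "(if x \<in> D then 1 else 0) = (if x \<in> D' then (1::real) else 0)" by simp
  qed
  then show ?thesis unfolding fr_mat_def by simp
qed

lemma sat_tog:
  assumes E: "E \<subseteq> cells n m" and dis: "\<forall>T\<in>S. area T \<inter> E = {}" and sp: "satisfies n m \<alpha> S p"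
  shows "satisfies n m \<alpha> S (\<lambda>D. p (tog E D))"
    and "entropy n m (\<lambda>D. p (tog E D)) = entropy n m p"
proof -
  have fr: "fr_distr n m T (\<lambda>D. p (tog E D)) = fr_distr n m T p" if "T \<in> S" for T
  proof -
    have "fr_distr n m T (\<lambda>D. p (tog E D)) = (\<Sum>D\<in>matrices n m. p (tog E D) * fr_mat T (tog E D))"
      unfolding fr_distr_def
      by (intro sum.cong refl arg_cong[where f="\<lambda>x. _ * x"] fr_mat_cong)
         (use dis that in \<open>auto simp: tog_def\<close>)
    also have "\<dots> = fr_distr n m T p" unfolding fr_distr_def
      by (rule sum_tog[OF E, of "\<lambda>D. p D * fr_mat T D"])
    finally show ?thesis .
  qed
  show "satisfies n m \<alpha> S (\<lambda>D. p (tog E D))"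
    using sp fr sum_tog[OF E, of p] tog_in[OF E] unfolding satisfies_def is_distr_def by auto
  show "entropy n m (\<lambda>D. p (tog E D)) = entropy n m p"
    unfolding entropy_def using sum_tog[OF E, of "\<lambda>x. p x * ln (p x)"] by simp
qed

lemma maxent_tog:
  assumes c: "consistent n m \<alpha> S" and E: "E \<subseteq> cells n m" and dis: "\<forall>T\<in>S. area T \<inter> E = {}"
    and D: "D \<in> matrices n m"
  shows "maxent n m \<alpha> S (tog E D) = maxent n m \<alpha> S D"
proof -
  note ms = maxent_spec[OF c]
  show ?thesis
  proof (rule maxent_unique[OF sat_tog(1)[OF E dis ms(1)] _ ms(1) ms(2) D])
    fix y assume "satisfies n m \<alpha> S y"
    then show "entropy n m y \<le> entropy n m (\<lambda>D. maxent n m \<alpha> S (tog E D))"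
      using ms(2) sat_tog(2)[OF E dis ms(1)] by simp
  qed
qed

lemma fr_mat_card:
  assumes "finite (area T)"
  shows "fr_mat T D = real (card (area T \<inter> D)) / real (card (area T))"
proof -
  have "(\<Sum>c\<in>area T. if c \<in> D then 1 else 0) = real (card (area T \<inter> D))"
    using assms by (simp add: sum.If_cases Int_def)
  then show ?thesis unfolding fr_mat_def by simp
qed

lemma tile_area: "is_tile n m T \<Longrightarrow> area T \<subseteq> cells n m \<and> area T \<noteq> {} \<and> finite (area T)"
proof -
  assume t: "is_tile n m T"
  have "finite (fst T)" using t unfolding is_tile_def by (meson finite_atLeastAtMost finite_subset)
  moreover have "finite (snd T)" using t unfolding is_tile_def by (meson finite_atLeastAtMost finite_subset)
  ultimately show ?thesis using t unfolding is_tile_def area_def cells_def by auto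
qed

lemma fr_mat_le1: "is_tile n m T \<Longrightarrow> fr_mat T D \<le> 1"
  using tile_area[of n m T] fr_mat_card[of T D]
  by (simp add: divide_le_eq_1 card_mono card_gt_0_iff)

lemma fr_mat_ge0: "fr_mat T D \<ge> 0"
  unfolding fr_mat_def by (simp add: sum_nonneg)

lemma exact_support:
  assumes t: "is_tile n m B" and sp: "satisfies n m \<alpha> S p" and B: "B \<in> S"
    and D: "D \<in> matrices n m" and pD: "p D > 0"
  shows "\<alpha> B = 1 \<Longrightarrow> area B \<subseteq> D" and "\<alpha> B = 0 \<Longrightarrow> area B \<inter> D = {}"
proof -
  have fin: "finite (matrices n m)" by (rule finite_matrices)
  have p0: "\<forall>D\<in>matrices n m. p D \<ge> 0" and ps: "sum p (matrices n m) = 1"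
    and fr: "fr_distr n m B p = \<alpha> B"
    using sp B unfolding satisfies_def is_distr_def by auto
  have ta: "area B \<subseteq> cells n m" "area B \<noteq> {}" "finite (area B)" using tile_area[OF t] by auto
  assume a1: "\<alpha> B = 1"
  have "(\<Sum>D\<in>matrices n m. p D * (1 - fr_mat B D)) = 0"
    using ps fr a1 unfolding fr_distr_def by (simp add: right_diff_distrib sum_subtractf)
  moreover have nn: "\<forall>D\<in>matrices n m. p D * (1 - fr_mat B D) \<ge> 0"
    using p0 fr_mat_le1[OF t] by simp
  ultimately have "\<forall>D\<in>matrices n m. p D * (1 - fr_mat B D) = 0"
    by (simp only: sum_nonneg_eq_0_iff[OF fin bspec[OF nn]])
  then have "p D * (1 - fr_mat B D) = 0" using D by blast
  then have "fr_mat B D = 1" using pD by simp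
  then have "card (area B \<inter> D) = card (area B)" using fr_mat_card[OF ta(3), of D] ta
    by (simp add: divide_eq_1_iff)
  then have "area B \<inter> D = area B" using card_subset_eq[OF ta(3)] by blast
  then show "area B \<subseteq> D" by blast
next
  have fin: "finite (matrices n m)" by (rule finite_matrices)
  have p0: "\<forall>D\<in>matrices n m. p D \<ge> 0" and fr: "fr_distr n m B p = \<alpha> B"
    using sp B unfolding satisfies_def is_distr_def by auto
  have ta: "finite (area B)" using tile_area[OF t] by auto
  assume a0: "\<alpha> B = 0"
  have nn: "\<forall>D\<in>matrices n m. p D * fr_mat B D \<ge> 0" using p0 fr_mat_ge0 by simp
  have "(\<Sum>D\<in>matrices n m. p D * fr_mat B D) = 0" using fr a0 unfolding fr_distr_def by simp
  then have "\<forall>D\<in>matrices n m. p D * fr_mat B D = 0"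
    by (simp only: sum_nonneg_eq_0_iff[OF fin bspec[OF nn]])
  then have "p D * fr_mat B D = 0" using D by blast
  then have "fr_mat B D = 0" using pD by simp
  then have "area B \<inter> D = {}" using fr_mat_card[OF ta, of D] ta by auto
  then show "area B \<inter> D = {}" .
qed

lemma slice:
  assumes tiles: "\<forall>B\<in>BS. is_tile n m B" and ex: "\<forall>B\<in>BS. exact \<alpha> B"
    and sp: "satisfies n m \<alpha> S p" and BS: "BS \<subseteq> S"
    and D: "D \<in> matrices n m" and pD: "p D > 0"
  shows "D \<inter> area_set BS = area_set {B\<in>BS. \<alpha> B = 1}"
proof -
  have one: "area B \<subseteq> D" if "B \<in> BS" "\<alpha> B = 1" for B
    using exact_support(1)[OF bspec[OF tiles that(1)] sp subsetD[OF BS that(1)] D pD that(2)] .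
  have zero: "area B \<inter> D = {}" if "B \<in> BS" "\<alpha> B = 0" for B
    using exact_support(2)[OF bspec[OF tiles that(1)] sp subsetD[OF BS that(1)] D pD that(2)] .
  show ?thesis
  proof
    show "D \<inter> area_set BS \<subseteq> area_set {B \<in> BS. \<alpha> B = 1}"
    proof
      fix c assume c: "c \<in> D \<inter> area_set BS"
      then obtain B where B: "B \<in> BS" "c \<in> area B" unfolding area_set_def by auto
      then have "\<alpha> B = 1" using zero[OF B(1)] c ex unfolding exact_def by blast
      then show "c \<in> area_set {B \<in> BS. \<alpha> B = 1}" using B unfolding area_set_def by blast
    qed
    show "area_set {B \<in> BS. \<alpha> B = 1} \<subseteq> D \<inter> area_set BS"
      using one unfolding area_set_def by auto
  qed
qed

lemma sum_slice:
  fixes f :: "(nat \<times> nat) set \<Rightarrow> real"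
  assumes fin: "finite C" and Z1: "Z1 \<subseteq> Z" and Z: "Z \<subseteq> C" and X: "X \<subseteq> C"
    and XZ: "X \<inter> Z = {}" and zero: "\<forall>D\<in>Pow C. D \<inter> Z \<noteq> Z1 \<longrightarrow> f D = 0"
  shows "sum f (Pow C) = (\<Sum>P\<in>Pow X. \<Sum>Q\<in>Pow (C - Z - X). f (Z1 \<union> P \<union> Q))"
proof -
  define Y where "Y = C - Z - X"
  define Sl where "Sl = {D \<in> Pow C. D \<inter> Z = Z1}"
  have "sum f (Pow C) = sum f Sl"
    using zero fin by (intro sum.mono_neutral_right) (auto simp: Sl_def)
  also have "\<dots> = (\<Sum>PQ\<in>Pow X \<times> Pow Y. f (Z1 \<union> fst PQ \<union> snd PQ))"
  proof (rule sum.reindex_bij_witness[of _ "\<lambda>PQ. Z1 \<union> fst PQ \<union> snd PQ" "\<lambda>D. (D \<inter> X, D \<inter> Y)"])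
    fix D assume "D \<in> Sl"
    then show "Z1 \<union> fst (D \<inter> X, D \<inter> Y) \<union> snd (D \<inter> X, D \<inter> Y) = D"
      unfolding Sl_def Y_def by auto
    show "(D \<inter> X, D \<inter> Y) \<in> Pow X \<times> Pow Y" by auto
    show "f (Z1 \<union> fst (D \<inter> X, D \<inter> Y) \<union> snd (D \<inter> X, D \<inter> Y)) = f D"
      using \<open>D \<in> Sl\<close> unfolding Sl_def Y_def by (auto intro!: arg_cong[where f=f])
  next
    fix PQ assume "PQ \<in> Pow X \<times> Pow Y"
    then show "((Z1 \<union> fst PQ \<union> snd PQ) \<inter> X, (Z1 \<union> fst PQ \<union> snd PQ) \<inter> Y) = PQ"
      using Z1 XZ unfolding Y_def by (cases PQ) auto
    show "Z1 \<union> fst PQ \<union> snd PQ \<in> Sl"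
      using \<open>PQ \<in> _\<close> Z1 Z X XZ unfolding Sl_def Y_def by auto
  qed
  also have "\<dots> = (\<Sum>P\<in>Pow X. \<Sum>Q\<in>Pow Y. f (Z1 \<union> P \<union> Q))"
    by (simp add: sum.cartesian_product case_prod_beta)
  finally show ?thesis unfolding Y_def .
qed



lemma sat_mono: "S' \<subseteq> S \<Longrightarrow> satisfies n m \<alpha> S p \<Longrightarrow> satisfies n m \<alpha> S' p"
  unfolding satisfies_def by auto

lemma sum_prod2: "(\<Sum>P\<in>A. \<Sum>Q\<in>B. f P * g Q) = sum f A * (sum g B :: real)"
  by (simp add: sum_product)

theorem theorem7:
  fixes n m :: nat and \<alpha> :: "tile \<Rightarrow> real" and TS US BS :: "tile set"
  assumes "n \<ge> 1" and "m \<ge> 1"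
    and "\<forall>T\<in>TS \<union> US \<union> BS. is_tile n m T"
    and "consistent n m \<alpha> (TS \<union> US \<union> BS)"
    and "\<forall>T\<in>BS. exact \<alpha> T"
    and "area_set TS \<inter> area_set US \<subseteq> area_set BS"
  shows "dtiles n m \<alpha> TS US BS = 1"
proof -
  note tiles = assms(3) and cons = assms(4) and exB = assms(5) and ov = assms(6)
  define C where "C = cells n m"
  have \<Omega>: "matrices n m = Pow C" unfolding C_def matrices_def ..
  have finC: "finite C" unfolding C_def by (rule finite_cells)
  define Zs where "Zs = area_set BS"
  define Z1 where "Z1 = area_set {B\<in>BS. \<alpha> B = 1}"
  define Xs where "Xs = area_set TS - Zs"
  define Ys where "Ys = C - Zs - Xs"
  have areaC: "area T \<subseteq> C" if "T \<in> TS \<union> US \<union> BS" for T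
    using tile_area[of n m T] tiles that unfolding C_def by auto
  have ZsC: "Zs \<subseteq> C" unfolding Zs_def area_set_def using areaC by blast
  have XsC: "Xs \<subseteq> C" unfolding Xs_def area_set_def using areaC by blast
  have Z1Zs: "Z1 \<subseteq> Zs" unfolding Z1_def Zs_def area_set_def by blast
  have XZ: "Xs \<inter> Zs = {}" unfolding Xs_def by blast
  obtain p0 where p0: "satisfies n m \<alpha> (TS \<union> US \<union> BS) p0" using cons unfolding consistent_def by blast
  have cA: "consistent n m \<alpha> (TS \<union> BS)" using sat_mono[OF _ p0] unfolding consistent_def by blast
  have cB: "consistent n m \<alpha> (US \<union> BS)" using sat_mono[OF _ p0] unfolding consistent_def by blast
  have cC: "consistent n m \<alpha> BS" using sat_mono[OF _ p0] unfolding consistent_def by blast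
  define a where "a = maxent n m \<alpha> (TS \<union> BS)"
  define b where "b = maxent n m \<alpha> (US \<union> BS)"
  define c where "c = maxent n m \<alpha> BS"
  define mm where "mm = maxent n m \<alpha> (TS \<union> US \<union> BS)"
  note sa = maxent_spec[OF cA, folded a_def]
  note sb = maxent_spec[OF cB, folded b_def]
  note sc = maxent_spec[OF cC, folded c_def]
  note sm = maxent_spec[OF cons, folded mm_def]
  have mA: "satisfies n m \<alpha> (TS \<union> BS) mm" by (rule sat_mono[OF _ sm(1)]) blast
  have mB: "satisfies n m \<alpha> (US \<union> BS) mm" by (rule sat_mono[OF _ sm(1)]) blast
  have mC: "satisfies n m \<alpha> BS mm" by (rule sat_mono[OF _ sm(1)]) blast
  have nonneg: "\<And>S p D. satisfies n m \<alpha> S p \<Longrightarrow> D \<in> Pow C \<Longrightarrow> p D \<ge> 0"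
    unfolding satisfies_def is_distr_def \<Omega> by auto
  have zoff: "\<forall>D\<in>Pow C. D \<inter> Zs \<noteq> Z1 \<longrightarrow> p D = 0" if "BS \<subseteq> S" "satisfies n m \<alpha> S p" for S p
  proof (intro ballI impI)
    fix D assume D: "D \<in> Pow C" "D \<inter> Zs \<noteq> Z1"
    have "\<not> p D > 0"
    proof
      assume "p D > 0"
      then have "D \<inter> Zs = Z1" using slice[of BS n m \<alpha> S p D] tiles exB that D(1)
        unfolding Zs_def Z1_def \<Omega> by blast
      then show False using D by simp
    qed
    then show "p D = 0" using nonneg[OF that(2) D(1)] by simp
  qed
  have za: "\<forall>D\<in>Pow C. D \<inter> Zs \<noteq> Z1 \<longrightarrow> a D = 0" by (rule zoff[OF _ sa(1)]) blast
  have zc: "\<forall>D\<in>Pow C. D \<inter> Zs \<noteq> Z1 \<longrightarrow> c D = 0" by (rule zoff[OF _ sc(1)]) blast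
  have SL: "sum f (Pow C) = (\<Sum>P\<in>Pow Xs. \<Sum>Q\<in>Pow Ys. f (Z1 \<union> P \<union> Q))"
    if "\<forall>D\<in>Pow C. D \<inter> Zs \<noteq> Z1 \<longrightarrow> f D = 0" for f :: "(nat \<times> nat) set \<Rightarrow> real"
    using sum_slice[OF finC Z1Zs ZsC XsC XZ that] unfolding Ys_def .
  have disTS: "area T \<inter> Ys = {}" if "T \<in> TS" for T
    using that unfolding Ys_def Xs_def area_set_def by blast
  have disBS: "area T \<subseteq> Zs" if "T \<in> BS" for T
    using that unfolding Zs_def area_set_def by blast
  have disUS: "area T \<inter> Xs = {}" if "T \<in> US" for T
    using that ov unfolding Xs_def Zs_def area_set_def by blast
  define al where "al P = a (Z1 \<union> P)" for P
  define be where "be Q = b (Z1 \<union> Q)" for Q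
  define \<kappa> where "\<kappa> = c Z1"
  have PQ: "Z1 \<union> P \<union> Q \<in> Pow C \<and> a (Z1 \<union> P \<union> Q) = al P \<and> b (Z1 \<union> P \<union> Q) = be Q
      \<and> c (Z1 \<union> P \<union> Q) = \<kappa> \<and> (Z1 \<union> P \<union> Q) \<inter> Zs = Z1
      \<and> (\<forall>T\<in>TS. fr_mat T (Z1 \<union> P \<union> Q) = fr_mat T (Z1 \<union> P))
      \<and> (\<forall>T\<in>US. fr_mat T (Z1 \<union> P \<union> Q) = fr_mat T (Z1 \<union> Q))"
    if P: "P \<in> Pow Xs" and Q: "Q \<in> Pow Ys" for P Q
  proof (intro conjI ballI)
    have Qd: "Q \<inter> Zs = {}" "Q \<inter> Xs = {}" "Q \<subseteq> C" using Q unfolding Ys_def by auto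
    have Pd: "P \<inter> Zs = {}" "P \<subseteq> C" using P XZ XsC by auto
    have D: "Z1 \<union> P \<union> Q \<in> matrices n m" using Pd Qd Z1Zs ZsC unfolding \<Omega> by auto
    then show "Z1 \<union> P \<union> Q \<in> Pow C" unfolding \<Omega> .
    show "(Z1 \<union> P \<union> Q) \<inter> Zs = Z1" using Pd Qd Z1Zs by auto
    have "tog Q (Z1 \<union> P \<union> Q) = Z1 \<union> P" using Pd Qd Z1Zs P unfolding tog_def by auto
    moreover have "\<forall>T\<in>TS \<union> BS. area T \<inter> Q = {}" using disTS disBS Qd Q by blast
    ultimately show "a (Z1 \<union> P \<union> Q) = al P" unfolding al_def a_def
      using maxent_tog[OF cA _ _ D, of Q] Qd C_def by simp
    have "tog P (Z1 \<union> P \<union> Q) = Z1 \<union> Q" using Pd Qd Z1Zs P unfolding tog_def by auto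
    moreover have "\<forall>T\<in>US \<union> BS. area T \<inter> P = {}" using disUS disBS Pd P by blast
    ultimately show "b (Z1 \<union> P \<union> Q) = be Q" unfolding be_def b_def
      using maxent_tog[OF cB _ _ D, of P] Pd C_def by simp
    have "tog (P \<union> Q) (Z1 \<union> P \<union> Q) = Z1" using Pd Qd Z1Zs P unfolding tog_def by auto
    moreover have "\<forall>T\<in>BS. area T \<inter> (P \<union> Q) = {}" using disBS Pd Qd by blast
    ultimately show "c (Z1 \<union> P \<union> Q) = \<kappa>" unfolding \<kappa>_def c_def
      using maxent_tog[OF cC _ _ D, of "P \<union> Q"] Pd Qd C_def by simp
    fix T assume "T \<in> TS"
    then show "fr_mat T (Z1 \<union> P \<union> Q) = fr_mat T (Z1 \<union> P)"
      using disTS[of T] Q by (intro fr_mat_cong) blast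
  next
    fix T assume "T \<in> US"
    then show "fr_mat T (Z1 \<union> P \<union> Q) = fr_mat T (Z1 \<union> Q)"
      using disUS[of T] P by (intro fr_mat_cong) blast
  qed
  define NX where "NX = real (card (Pow Xs))"
  define NY where "NY = real (card (Pow Ys))"
  have finX: "finite Xs" using XsC finC finite_subset by blast
  have finY: "finite Ys" using finC unfolding Ys_def by simp
  have NX0: "NX > 0" unfolding NX_def using finX by (simp add: card_Pow)
  have NY0: "NY > 0" unfolding NY_def using finY by (simp add: card_Pow)
  have suma: "sum al (Pow Xs) * NY = 1"
  proof -
    have "1 = sum a (Pow C)" using sa(1) unfolding satisfies_def is_distr_def \<Omega> by simp
    also have "\<dots> = (\<Sum>P\<in>Pow Xs. \<Sum>Q\<in>Pow Ys. al P * 1)" using SL[OF za] PQ by simp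
    also have "\<dots> = sum al (Pow Xs) * NY" unfolding NY_def by (simp add: sum_distrib_right mult.commute)
    finally show ?thesis by simp
  qed
  have sumb: "NX * sum be (Pow Ys) = 1"
  proof -
    have zb: "\<forall>D\<in>Pow C. D \<inter> Zs \<noteq> Z1 \<longrightarrow> b D = 0" by (rule zoff[OF _ sb(1)]) blast
    have "1 = sum b (Pow C)" using sb(1) unfolding satisfies_def is_distr_def \<Omega> by simp
    also have "\<dots> = (\<Sum>P\<in>Pow Xs. \<Sum>Q\<in>Pow Ys. 1 * be Q)" using SL[OF zb] PQ by simp
    also have "\<dots> = NX * sum be (Pow Ys)" unfolding NX_def by (subst sum_prod2) simp
    finally show ?thesis by simp
  qed
  have sumc: "NX * NY * \<kappa> = 1"
  proof -
    have "1 = sum c (Pow C)" using sc(1) unfolding satisfies_def is_distr_def \<Omega> by simp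
    also have "\<dots> = (\<Sum>P\<in>Pow Xs. \<Sum>Q\<in>Pow Ys. \<kappa>)" using SL[OF zc] PQ by simp
    also have "\<dots> = NX * NY * \<kappa>" unfolding NX_def NY_def by simp
    finally show ?thesis by simp
  qed
  have k0: "\<kappa> > 0" using sumc NX0 NY0 by (smt (verit) mult_pos_pos mult_nonpos_nonneg zero_less_mult_iff)
  have "NX * sum be (Pow Ys) = NX * (NY * \<kappa>)" using sumb sumc by (simp add: mult.assoc)
  then have eb: "sum be (Pow Ys) = NY * \<kappa>" using NX0 by simp
  have keyb: "sum (\<lambda>Q. be Q / \<kappa>) (Pow Ys) = NY"
    using eb k0 by (simp add: sum_divide_distrib[symmetric])
  have "sum al (Pow Xs) * NY = (NX * \<kappa>) * NY" using suma sumc by (simp add: algebra_simps)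
  then have ea: "sum al (Pow Xs) = NX * \<kappa>" using NY0 by simp
  have keya: "sum (\<lambda>P. al P / \<kappa>) (Pow Xs) = NX"
    using ea k0 by (simp add: sum_divide_distrib[symmetric])
  define r where "r D = a D * b D / c D" for D
  have zr: "\<forall>D\<in>Pow C. D \<inter> Zs \<noteq> Z1 \<longrightarrow> r D = 0" using za unfolding r_def by simp
  have rPQ: "r (Z1 \<union> P \<union> Q) = al P * be Q / \<kappa>" if "P \<in> Pow Xs" "Q \<in> Pow Ys" for P Q
    using PQ[OF that] unfolding r_def by simp
  have zmul: "\<forall>D\<in>Pow C. D \<inter> Zs \<noteq> Z1 \<longrightarrow> p D * g D = 0"
    if "\<forall>D\<in>Pow C. D \<inter> Zs \<noteq> Z1 \<longrightarrow> p D = 0" for p g :: "(nat \<times> nat) set \<Rightarrow> real"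
    using that by simp
  have rsum: "sum r (Pow C) = 1"
  proof -
    have "sum r (Pow C) = (\<Sum>P\<in>Pow Xs. \<Sum>Q\<in>Pow Ys. al P * (be Q / \<kappa>))"
      using SL[OF zr] rPQ by simp
    also have "\<dots> = sum al (Pow Xs) * NY" using keyb by (subst sum_prod2) simp
    finally show "sum r (Pow C) = 1" using suma by simp
  qed
  have rM: "satisfies n m \<alpha> (TS \<union> US \<union> BS) r"
    unfolding satisfies_def is_distr_def \<Omega>
  proof (intro conjI ballI)
    fix D assume "D \<in> Pow C"
    then show "0 \<le> r D" unfolding r_def
      using nonneg[OF sa(1)] nonneg[OF sb(1)] nonneg[OF sc(1)] by simp
  next
    show "sum r (Pow C) = 1" by (rule rsum)
  next
    fix T assume T: "T \<in> TS \<union> US \<union> BS"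
    have frr: "fr_distr n m T r = (\<Sum>P\<in>Pow Xs. \<Sum>Q\<in>Pow Ys. r (Z1 \<union> P \<union> Q) * fr_mat T (Z1 \<union> P \<union> Q))"
      unfolding fr_distr_def \<Omega> using SL[OF zmul[OF zr]] .
    consider "T \<in> TS" | "T \<in> US" | "T \<in> BS" using T by blast
    then show "fr_distr n m T r = \<alpha> T"
    proof cases
      case 1
      have "fr_distr n m T r = (\<Sum>P\<in>Pow Xs. \<Sum>Q\<in>Pow Ys. (al P * fr_mat T (Z1 \<union> P)) * (be Q / \<kappa>))"
        unfolding frr using rPQ PQ 1 by (intro sum.cong refl) simp
      also have "\<dots> = (\<Sum>P\<in>Pow Xs. al P * fr_mat T (Z1 \<union> P)) * NY"
        using keyb by (subst sum_prod2) simp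
      also have "\<dots> = fr_distr n m T a"
      proof -
        have "fr_distr n m T a = (\<Sum>P\<in>Pow Xs. \<Sum>Q\<in>Pow Ys. a (Z1 \<union> P \<union> Q) * fr_mat T (Z1 \<union> P \<union> Q))"
          unfolding fr_distr_def \<Omega> using SL[OF zmul[OF za]] .
        also have "\<dots> = (\<Sum>P\<in>Pow Xs. \<Sum>Q\<in>Pow Ys. (al P * fr_mat T (Z1 \<union> P)) * 1)"
          using PQ 1 by (intro sum.cong refl) simp
        also have "\<dots> = (\<Sum>P\<in>Pow Xs. al P * fr_mat T (Z1 \<union> P)) * NY"
          unfolding NY_def by (subst sum_prod2) simp
        finally show ?thesis by simp
      qed
      also have "\<dots> = \<alpha> T" using sa(1) 1 unfolding satisfies_def by simp
      finally show ?thesis .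
    next
      case 2
      have "fr_distr n m T r = (\<Sum>P\<in>Pow Xs. \<Sum>Q\<in>Pow Ys. (al P / \<kappa>) * (be Q * fr_mat T (Z1 \<union> Q)))"
        unfolding frr using rPQ PQ 2 by (intro sum.cong refl) simp
      also have "\<dots> = NX * (\<Sum>Q\<in>Pow Ys. be Q * fr_mat T (Z1 \<union> Q))"
        using keya by (subst sum_prod2) simp
      also have "\<dots> = fr_distr n m T b"
      proof -
        have zb: "\<forall>D\<in>Pow C. D \<inter> Zs \<noteq> Z1 \<longrightarrow> b D = 0" by (rule zoff[OF _ sb(1)]) blast
        have "fr_distr n m T b = (\<Sum>P\<in>Pow Xs. \<Sum>Q\<in>Pow Ys. b (Z1 \<union> P \<union> Q) * fr_mat T (Z1 \<union> P \<union> Q))"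
          unfolding fr_distr_def \<Omega> using SL[OF zmul[OF zb]] .
        also have "\<dots> = (\<Sum>P\<in>Pow Xs. \<Sum>Q\<in>Pow Ys. 1 * (be Q * fr_mat T (Z1 \<union> Q)))"
          using PQ 2 by (intro sum.cong refl) simp
        also have "\<dots> = NX * (\<Sum>Q\<in>Pow Ys. be Q * fr_mat T (Z1 \<union> Q))"
          unfolding NX_def by (subst sum_prod2) simp
        finally show ?thesis by simp
      qed
      also have "\<dots> = \<alpha> T" using sb(1) 2 unfolding satisfies_def by simp
      finally show ?thesis .
    next
      case 3
      have frB: "fr_distr n m T p = fr_mat T Z1 * sum p (Pow C)"
        if "\<forall>D\<in>Pow C. D \<inter> Zs \<noteq> Z1 \<longrightarrow> p D = 0" for p
      proof -
        have "fr_distr n m T p = (\<Sum>D\<in>Pow C. fr_mat T Z1 * p D)"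
          unfolding fr_distr_def \<Omega>
        proof (rule sum.cong[OF refl])
          fix D assume D: "D \<in> Pow C"
          show "p D * fr_mat T D = fr_mat T Z1 * p D"
          proof (cases "D \<inter> Zs = Z1")
            case True
            have ac: "area T \<inter> D = area T \<inter> Z1" using disBS[OF 3] True by blast
            show ?thesis using fr_mat_cong[OF ac] by simp
          next
            case False then show ?thesis using that D by simp
          qed
        qed
        then show ?thesis by (simp add: sum_distrib_left)
      qed
      have "fr_distr n m T r = fr_mat T Z1" using frB[OF zr] rsum by simp
      also have "\<dots> = fr_distr n m T c"
        using frB[OF zc] sc(1) unfolding satisfies_def is_distr_def \<Omega> by simp
      also have "\<dots> = \<alpha> T" using sc(1) 3 unfolding satisfies_def by simp
      finally show ?thesis .
    qed
  qed
  have rA: "satisfies n m \<alpha> (TS \<union> BS) r" by (rule sat_mono[OF _ rM]) blast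
  have rB: "satisfies n m \<alpha> (US \<union> BS) r" by (rule sat_mono[OF _ rM]) blast
  have rC: "satisfies n m \<alpha> BS r" by (rule sat_mono[OF _ rM]) blast
  have lnr: "ln (r D) = ln (a D) + ln (b D) - ln (c D)" if "a D > 0" "b D > 0" "c D > 0" for D
    unfolding r_def using that by (simp add: ln_mult ln_div)
  have rpos: "a D > 0 \<and> b D > 0 \<and> c D > 0" if "D \<in> Pow C" "r D \<noteq> 0" for D
  proof -
    have "a D \<noteq> 0" "b D \<noteq> 0" "c D \<noteq> 0" using that(2) unfolding r_def by auto
    then show ?thesis using nonneg[OF sa(1) that(1)] nonneg[OF sb(1) that(1)] nonneg[OF sc(1) that(1)]
      by auto
  qed
  have hr: "r D * ln (r D) = r D * ln (a D) + r D * ln (b D) - r D * ln (c D)" if "D \<in> Pow C" for D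
  proof (cases "r D = 0")
    case False
    have e: "ln (r D) = ln (a D) + ln (b D) - ln (c D)" using lnr[of D] rpos[OF that False] by blast
    show ?thesis unfolding e by (simp add: ring_distribs)
  qed simp
  have Hr: "entropy n m r = entropy n m a + entropy n m b - entropy n m c"
  proof -
    have "(\<Sum>D\<in>Pow C. r D * ln (r D)) =
       (\<Sum>D\<in>Pow C. r D * ln (a D)) + (\<Sum>D\<in>Pow C. r D * ln (b D)) - (\<Sum>D\<in>Pow C. r D * ln (c D))"
      by (subst sum.cong[OF refl hr], assumption) (simp add: sum.distrib sum_subtractf)
    then show ?thesis
      using pyth_eq[OF sa(1) sa(2) rA] pyth_eq[OF sb(1) sb(2) rB] pyth_eq[OF sc(1) sc(2) rC]
      unfolding entropy_def \<Omega> by simp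
  qed
  have mpos: "a D > 0 \<and> b D > 0 \<and> c D > 0" if "D \<in> Pow C" "mm D > 0" for D
    using pyth_supp[OF sa(1) sa(2) mA, of D] pyth_supp[OF sb(1) sb(2) mB, of D]
      pyth_supp[OF sc(1) sc(2) mC, of D] that unfolding \<Omega> by auto
  have mr: "mm D > 0 \<longrightarrow> r D > 0" if "D \<in> Pow C" for D
    using mpos[OF that] unfolding r_def by auto
  have hm: "mm D * ln (r D) = mm D * ln (a D) + mm D * ln (b D) - mm D * ln (c D)" if "D \<in> Pow C" for D
  proof (cases "mm D > 0")
    case True
    have e: "ln (r D) = ln (a D) + ln (b D) - ln (c D)" using lnr[of D] mpos[OF that True] by blast
    show ?thesis unfolding e by (simp add: ring_distribs)
  next
    case False
    then have "mm D = 0" using nonneg[OF sm(1) that] by simp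
    then show ?thesis by simp
  qed
  have "(\<Sum>D\<in>Pow C. mm D * ln (mm D) - mm D * ln (r D)) \<ge> 0"
    using gibbs(1)[of "Pow C" mm r] finC mr nonneg[OF sm(1)] nonneg[OF rM] rsum sm(1)
    unfolding satisfies_def is_distr_def \<Omega> by auto
  moreover have "(\<Sum>D\<in>Pow C. mm D * ln (mm D) - mm D * ln (r D)) =
     (\<Sum>D\<in>Pow C. mm D * ln (mm D)) - ((\<Sum>D\<in>Pow C. mm D * ln (a D)) + (\<Sum>D\<in>Pow C. mm D * ln (b D))
        - (\<Sum>D\<in>Pow C. mm D * ln (c D)))"
  proof -
    have "(\<Sum>D\<in>Pow C. mm D * ln (mm D) - mm D * ln (r D)) =
      (\<Sum>D\<in>Pow C. mm D * ln (mm D) - (mm D * ln (a D) + mm D * ln (b D) - mm D * ln (c D)))"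
      by (rule sum.cong[OF refl]) (simp add: hm)
    then show ?thesis by (simp add: sum.distrib sum_subtractf)
  qed
  ultimately have le: "entropy n m mm \<le> entropy n m a + entropy n m b - entropy n m c"
    using pyth_eq[OF sa(1) sa(2) mA] pyth_eq[OF sb(1) sb(2) mB] pyth_eq[OF sc(1) sc(2) mC]
    unfolding entropy_def \<Omega> by simp
  have ge: "entropy n m r \<le> entropy n m mm" by (rule sm(2)[OF rM])
  have Hm: "entropy n m mm = entropy n m a + entropy n m b - entropy n m c" using le ge Hr by simp
  have K1: "KL_tiles n m \<alpha> (TS \<union> US \<union> BS) BS = entropy n m c - entropy n m mm"
    unfolding KL_tiles_def mm_def[symmetric] c_def[symmetric] by (rule KL_pyth[OF sc(1) sc(2) mC])
  have K2: "KL_tiles n m \<alpha> (TS \<union> US \<union> BS) (US \<union> BS) = entropy n m b - entropy n m mm"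
    unfolding KL_tiles_def mm_def[symmetric] b_def[symmetric] by (rule KL_pyth[OF sb(1) sb(2) mB])
  have K3: "KL_tiles n m \<alpha> (TS \<union> US \<union> BS) (TS \<union> BS) = entropy n m a - entropy n m mm"
    unfolding KL_tiles_def mm_def[symmetric] a_def[symmetric] by (rule KL_pyth[OF sa(1) sa(2) mA])
  show ?thesis unfolding dtiles_def Let_def K1 K2 K3 using Hm by simp
qed


end
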